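(* For every $n$, there is a labeling scheme for $n\times n$ permutation matrices for dominance sum queries with labels of $O(\sqrt{n}\log n)$ bits: there is an encoder that, given any $n\times n$ permutation matrix $P$, assigns a label of $O(\sqrt{n}\log n)$ bits to each row and each column of $P$, and a decoder (depending only on $n$) that, given only the label of row $i$ and the label of column $j$, outputs $\sum_{i'\ge i,\,j'\ge j}P[i',j']$.
   Context: A permutation matrix here is a $0/1$ matrix in which every row and every column contains at most one entry equal to $1$. (Such matrices are used to represent unit-Monge matrices: for a permutation matrix $P$, the matrix $M[i,j]=\sum_{i'\ge i,j'\ge j}P[i',j']$ is unit-Monge.) *)

theory Defs
  imports Complex_Main
begin

definition perm_matrix :: "nat \<Rightarrow> (nat \<Rightarrow> nat \<Rightarrow> nat) \<Rightarrow> bool" where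
  "perm_matrix n P \<longleftrightarrow>
     (\<forall>i j. P i j \<in> {0, 1}) \<and>
     (\<forall>i j. (n \<le> i \<or> n \<le> j) \<longrightarrow> P i j = 0) \<and>
     (\<forall>i<n. card {j. j < n \<and> P i j = 1} \<le> 1) \<and>
     (\<forall>j<n. card {i. i < n \<and> P i j = 1} \<le> 1)"

definition dom_sum :: "nat \<Rightarrow> (nat \<Rightarrow> nat \<Rightarrow> nat) \<Rightarrow> nat \<Rightarrow> nat \<Rightarrow> nat" where
  "dom_sum n P i j = (\<Sum>i'\<in>{i..<n}. \<Sum>j'\<in>{j..<n}. P i' j')"

end

theory Submission
  imports Defs
begin

fun bits :: "nat \<Rightarrow> nat \<Rightarrow> bool list" where
  "bits 0 x = []"
| "bits (Suc w) x = odd x # bits w (x div 2)"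

fun bval :: "bool list \<Rightarrow> nat" where
  "bval [] = 0"
| "bval (b # bs) = of_bool b + 2 * bval bs"

lemma length_bits[simp]: "length (bits w x) = w"
  by (induction w arbitrary: x) auto

lemma bval_bits: "x < 2 ^ w \<Longrightarrow> bval (bits w x) = x"
proof (induction w arbitrary: x)
  case 0 then show ?case by simp
next
  case (Suc w)
  have "x div 2 < 2 ^ w" using Suc.prems by auto
  then show ?case using Suc.IH by simp
qed

fun enc :: "nat \<Rightarrow> nat list \<Rightarrow> bool list" where
  "enc w [] = []"
| "enc w (x # xs) = bits w x @ enc w xs"

definition getv :: "nat \<Rightarrow> bool list \<Rightarrow> nat \<Rightarrow> nat" where
  "getv w bs t = bval (take w (drop (t * w) bs))"

lemma length_enc[simp]: "length (enc w xs) = w * length xs"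
  by (induction xs) auto

lemma getv_enc: "\<forall>x\<in>set xs. x < 2 ^ w \<Longrightarrow> t < length xs \<Longrightarrow> getv w (enc w xs) t = xs ! t"
proof (induction xs arbitrary: t)
  case Nil then show ?case by simp
next
  case (Cons x xs)
  show ?case
  proof (cases t)
    case 0 then show ?thesis using Cons.prems by (simp add: getv_def bval_bits)
  next
    case (Suc t')
    have "getv w (enc w (x # xs)) t = getv w (enc w xs) t'"
      using Suc by (simp add: getv_def add.commute)
    then show ?thesis using Cons Suc by simp
  qed
qed


definition colv :: "nat \<Rightarrow> (nat \<Rightarrow> nat \<Rightarrow> nat) \<Rightarrow> nat \<Rightarrow> nat" where
  "colv n P c = (if \<exists>r<n. P r c = 1 then Suc (THE r. r < n \<and> P r c = 1) else 0)"

lemma sum01: "(\<forall>x. f x \<in> {0,1::nat}) \<Longrightarrow> finite A \<Longrightarrow> sum f A = card {x\<in>A. f x = 1}"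
proof -
  assume h: "\<forall>x. f x \<in> {0,1}" and fin: "finite A"
  have "sum f A = (\<Sum>x\<in>A. if f x = 1 then 1 else 0)"
    by (rule sum.cong) (use h in auto)
  also have "\<dots> = card {x\<in>A. f x = 1}"
  proof -
    have "A \<inter> {x. f x = 1} = {x\<in>A. f x = 1}" by blast
    then show ?thesis using fin by (simp add: sum.If_cases)
  qed
  finally show ?thesis .
qed

lemma t1: fixes P :: "nat \<Rightarrow> nat \<Rightarrow> nat" assumes "r < n" "P r c = 1" and cd: "card {x. x < n \<and> P x c = 1} \<le> 1"
  shows "{x. x < n \<and> P x c = 1} = {r}"
proof -
  have fin: "finite {x. x < n \<and> P x c = 1}" by simp
  have "r \<in> {x. x < n \<and> P x c = 1}" using assms by simp
  moreover have "\<forall>a\<in>{x. x < n \<and> P x c = 1}. \<forall>b\<in>{x. x < n \<and> P x c = 1}. a = b"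
    using cd card_le_Suc0_iff_eq[OF fin] unfolding One_nat_def by blast
  ultimately show ?thesis by blast
qed

lemma t2: fixes P :: "nat \<Rightarrow> nat \<Rightarrow> nat" assumes eq: "{x. x < n \<and> P x c = 1} = {r}" shows "(THE r. r < n \<and> P r c = 1) = r"
  by (rule the_equality) (use eq in auto)

lemma t3: fixes P :: "nat \<Rightarrow> nat \<Rightarrow> nat" assumes eq: "{x. x < n \<and> P x c = 1} = {r}" "i \<le> r" shows "{x\<in>{i..<n}. P x c = 1} = {r}"
proof -
  have "\<forall>x. (x<n \<and> P x c = 1) \<longleftrightarrow> x = r" using eq by blast
  then show ?thesis using assms(2) by force
qed

lemma t4: fixes P :: "nat \<Rightarrow> nat \<Rightarrow> nat" assumes eq: "{x. x < n \<and> P x c = 1} = {r}" "\<not> i \<le> r" shows "{x\<in>{i..<n}. P x c = 1} = {}"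
proof -
  have "\<forall>x. (x<n \<and> P x c = 1) \<longleftrightarrow> x = r" using eq by blast
  then show ?thesis using assms(2) by force
qed

lemma col_sum:
  assumes pm: "perm_matrix n P" and c: "c < n"
  shows "(\<Sum>i'\<in>{i..<n}. P i' c) = (if i < colv n P c then 1 else 0)"
    and "colv n P c \<le> n"
proof -
  have v: "\<forall>x. P x c \<in> {0,1}" using pm unfolding perm_matrix_def by blast
  have s: "(\<Sum>i'\<in>{i..<n}. P i' c) = card {x\<in>{i..<n}. P x c = 1}"
    using sum01[OF v] by simp
  have "(\<Sum>i'\<in>{i..<n}. P i' c) = (if i < colv n P c then 1 else 0) \<and> colv n P c \<le> n"
  proof (cases "\<exists>r<n. P r c = 1")
    case False
    then have "{x\<in>{i..<n}. P x c = 1} = {}" by auto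
    then have "(\<Sum>i'\<in>{i..<n}. P i' c) = 0" using s by simp
    moreover have "colv n P c = 0" using False unfolding colv_def by simp
    ultimately show ?thesis by simp
  next
    case True
    then obtain r where r: "r < n" "P r c = 1" by blast
    have cd: "card {x. x < n \<and> P x c = 1} \<le> 1" using pm c unfolding perm_matrix_def by blast
    have eq: "{x. x < n \<and> P x c = 1} = {r}" using t1[of r n P c] r cd by blast
    have the: "(THE r. r < n \<and> P r c = 1) = r" using t2[of n P c r] eq by blast
    have cv: "colv n P c = Suc r" using True the unfolding colv_def by simp
    show ?thesis
    proof (cases "i \<le> r")
      case True
      have "{x\<in>{i..<n}. P x c = 1} = {r}" using t3[of n P c r i] eq True by blast
      then show ?thesis using s cv True r by simp
    next
      case False
      have "{x\<in>{i..<n}. P x c = 1} = {}" using t4[of n P c r i] eq False by blast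
      then show ?thesis using s cv False r by simp
    qed
  qed
  then show "(\<Sum>i'\<in>{i..<n}. P i' c) = (if i < colv n P c then 1 else 0)" and "colv n P c \<le> n" by auto
qed

lemma dom_le:
  assumes pm: "perm_matrix n P"
  shows "dom_sum n P i j \<le> n"
proof -
  have "dom_sum n P i j = (\<Sum>j'\<in>{j..<n}. \<Sum>i'\<in>{i..<n}. P i' j')"
    unfolding dom_sum_def by (rule sum.swap)
  also have "\<dots> \<le> (\<Sum>j'\<in>{j..<n}. 1)"
    by (rule sum_mono) (simp add: col_sum[OF pm])
  also have "\<dots> \<le> n" by simp
  finally show ?thesis .
qed

lemma dom_split:
  assumes pm: "perm_matrix n P" and "a \<le> j" "j \<le> n"
  shows "dom_sum n P i a = dom_sum n P i j + card {c\<in>{a..<j}. i < colv n P c}"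
proof -
  have "dom_sum n P i a = (\<Sum>c\<in>{a..<n}. \<Sum>i'\<in>{i..<n}. P i' c)"
    unfolding dom_sum_def by (rule sum.swap)
  also have "{a..<n} = {a..<j} \<union> {j..<n}" using assms by auto
  also have "(\<Sum>c\<in>{a..<j} \<union> {j..<n}. \<Sum>i'\<in>{i..<n}. P i' c) =
     (\<Sum>c\<in>{a..<j}. \<Sum>i'\<in>{i..<n}. P i' c) + (\<Sum>c\<in>{j..<n}. \<Sum>i'\<in>{i..<n}. P i' c)"
    by (rule sum.union_disjoint) auto
  also have "(\<Sum>c\<in>{j..<n}. \<Sum>i'\<in>{i..<n}. P i' c) = dom_sum n P i j"
    unfolding dom_sum_def by (rule sum.swap[symmetric])
  also have "(\<Sum>c\<in>{a..<j}. \<Sum>i'\<in>{i..<n}. P i' c) = (\<Sum>c\<in>{a..<j}. if i < colv n P c then 1 else 0)"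
    by (rule sum.cong) (use assms col_sum[OF pm] in auto)
  also have "\<dots> = card {c\<in>{a..<j}. i < colv n P c}"
  proof -
    have "{a..<j} \<inter> {c. i < colv n P c} = {c\<in>{a..<j}. i < colv n P c}" by blast
    then show ?thesis by (simp add: sum.If_cases)
  qed
  finally show ?thesis by simp
qed

lemma card_shift:
  fixes a b j i :: nat and g :: "nat \<Rightarrow> nat"
  assumes jab: "j \<le> a + b" and that: "\<And>c. Q c \<longleftrightarrow> i < g c"
  shows "card {c\<in>{a..<j}. Q c} = card {t. t < b \<and> i < (if a + t < j then g (a + t) else 0)}"
proof -
  have e1: "{t. t < b \<and> i < (if a + t < j then g (a + t) else 0)} = {t. a + t < j \<and> Q (a + t)}"
  proof (rule set_eqI)
    fix t
    show "t \<in> {t. t < b \<and> i < (if a + t < j then g (a + t) else 0)} \<longleftrightarrow> t \<in> {t. a + t < j \<and> Q (a + t)}"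
    proof (cases "a + t < j")
      case True
      then have "t < b" using jab by linarith
      then show ?thesis using True that[of "a + t"] by simp
    next
      case False
      then show ?thesis by simp
    qed
  qed
  have e2: "{c\<in>{a..<j}. Q c} = (\<lambda>t. a + t) ` {t. a + t < j \<and> Q (a + t)}"
  proof (rule set_eqI)
    fix c
    show "c \<in> {c\<in>{a..<j}. Q c} \<longleftrightarrow> c \<in> (\<lambda>t. a + t) ` {t. a + t < j \<and> Q (a + t)}"
    proof
      assume "c \<in> {c\<in>{a..<j}. Q c}"
      then have c: "a \<le> c" "c < j" "Q c" by auto
      then have "c = a + (c - a)" "c - a \<in> {t. a + t < j \<and> Q (a + t)}" by auto
      then show "c \<in> (\<lambda>t. a + t) ` {t. a + t < j \<and> Q (a + t)}" by (rule image_eqI)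
    next
      assume "c \<in> (\<lambda>t. a + t) ` {t. a + t < j \<and> Q (a + t)}"
      then obtain t where "c = a + t" "a + t < j" "Q (a + t)" by blast
      then show "c \<in> {c\<in>{a..<j}. Q c}" by simp
    qed
  qed
  have "inj (\<lambda>t::nat. a + t)" by (simp add: inj_def)
  then have "card ((\<lambda>t. a + t) ` {t. a + t < j \<and> Q (a + t)}) = card {t. a + t < j \<and> Q (a + t)}"
    by (simp add: card_image inj_on_def)
  then show ?thesis using e1 e2 by simp
qed
lemma wbound:
  fixes n :: nat assumes n: "n \<ge> 2"
  shows "n < 2 ^ nat \<lceil>log 2 (real n + 1)\<rceil>"
    and "real (nat \<lceil>log 2 (real n + 1)\<rceil>) \<le> 3 * log 2 (real n)"
proof -
  let ?w = "nat \<lceil>log 2 (real n + 1)\<rceil>"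
  have lpos: "log 2 (real n + 1) \<ge> 0" using n by simp
  have "real n + 1 = 2 powr log 2 (real n + 1)" using n by simp
  also have "\<dots> \<le> 2 powr real ?w"
    by (rule powr_mono) (use lpos in auto)
  also have "\<dots> = real (2 ^ ?w)" by (simp only: powr_realpow) simp
  finally show "n < 2 ^ ?w" by linarith
  have l1: "log 2 (real n) \<ge> 1" using n by simp
  have "log 2 (real n + 1) \<le> log 2 (2 * real n)" using n by simp
  also have "\<dots> = 1 + log 2 (real n)" using n by (simp add: log_mult)
  finally have "log 2 (real n + 1) \<le> 1 + log 2 (real n)" .
  then have "real ?w \<le> 2 + log 2 (real n)" using lpos by linarith
  then show "real ?w \<le> 3 * log 2 (real n)" using l1 by linarith
qed

lemma bbound:
  fixes n :: nat assumes n: "n \<ge> 2"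
  shows "real (Suc (nat \<lceil>sqrt (real n)\<rceil>)) \<le> 3 * sqrt (real n)"
    and "real (Suc (Suc ((n - 1) div nat \<lceil>sqrt (real n)\<rceil>))) \<le> 3 * sqrt (real n)"
    and "nat \<lceil>sqrt (real n)\<rceil> > 0"
proof -
  let ?b = "nat \<lceil>sqrt (real n)\<rceil>"
  have s1: "sqrt (real n) \<ge> 1" using n by simp
  have bge: "real ?b \<ge> sqrt (real n)" by linarith
  have ble: "real ?b \<le> sqrt (real n) + 1"
    using ceiling_correct[of "sqrt (real n)"] s1 by (simp add: of_nat_nat)
  have "real (Suc ?b) = real ?b + 1" by (simp only: of_nat_Suc)
  then show "real (Suc ?b) \<le> 3 * sqrt (real n)" using ble s1 by linarith
  show bpos: "?b > 0" using bge s1 by linarith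
  have "real ((n - 1) div ?b) \<le> real (n - 1) / real ?b"
  proof -
    have "(n - 1) div ?b * ?b \<le> n - 1" by (metis div_mult_mod_eq le_add1)
    then have "real ((n - 1) div ?b) * real ?b \<le> real (n - 1)" by (metis of_nat_le_iff of_nat_mult)
    then show ?thesis using bpos by (simp add: le_divide_eq)
  qed
  also have "\<dots> \<le> real n / sqrt (real n)"
    by (rule frac_le) (use s1 bge in auto)
  also have "\<dots> = sqrt (real n)" by (metis real_div_sqrt of_nat_0_le_iff)
  finally have q: "real ((n - 1) div ?b) \<le> sqrt (real n)" .
  have "real (Suc (Suc ((n - 1) div ?b))) = real ((n - 1) div ?b) + 2" by simp
  then show "real (Suc (Suc ((n - 1) div ?b))) \<le> 3 * sqrt (real n)" using s1 q by linarith
qed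

lemma main_lem:
  fixes n :: nat assumes n: "n \<ge> 2"
  shows "\<exists>(rowlab :: (nat \<Rightarrow> nat \<Rightarrow> nat) \<Rightarrow> nat \<Rightarrow> bool list)
      (collab :: (nat \<Rightarrow> nat \<Rightarrow> nat) \<Rightarrow> nat \<Rightarrow> bool list)
      (dec :: bool list \<Rightarrow> bool list \<Rightarrow> nat).
      \<forall>P. perm_matrix n P \<longrightarrow>
        (\<forall>i<n. real (length (rowlab P i)) \<le> 9 * sqrt (real n) * log 2 (real n)) \<and>
        (\<forall>j<n. real (length (collab P j)) \<le> 9 * sqrt (real n) * log 2 (real n)) \<and>
        (\<forall>i<n. \<forall>j<n. dec (rowlab P i) (collab P j) = dom_sum n P i j)"
proof -
  define b where "b = nat \<lceil>sqrt (real n)\<rceil>"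
  define w where "w = nat \<lceil>log 2 (real n + 1)\<rceil>"
  define m where "m = Suc ((n - 1) div b)"
  have nw: "n < 2 ^ w" unfolding w_def using wbound(1)[OF n] .
  have wle: "real w \<le> 3 * log 2 (real n)" unfolding w_def using wbound(2)[OF n] .
  have ble: "real (Suc b) \<le> 3 * sqrt (real n)" unfolding b_def using bbound(1)[OF n] .
  have mle: "real (Suc m) \<le> 3 * sqrt (real n)" unfolding b_def m_def using bbound(2)[OF n] .
  have bpos: "b > 0" unfolding b_def using bbound(3)[OF n] .
  have l0: "log 2 (real n) \<ge> 0" using n by simp
  define rowlab where "rowlab = (\<lambda>P i. enc w (i # map (\<lambda>k. dom_sum n P i (k * b)) [0..<m]))"
  define collab where "collab = (\<lambda>(P :: nat \<Rightarrow> nat \<Rightarrow> nat) j. enc w ((j div b) #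
      map (\<lambda>t. if j div b * b + t < j then colv n P (j div b * b + t) else 0) [0..<b]))"
  define dec where "dec = (\<lambda>rl cl. getv w rl (Suc (getv w cl 0)) -
      card {t. t < b \<and> getv w rl 0 < getv w cl (Suc t)})"
  have lenbound: "real (w * Suc k) \<le> 9 * sqrt (real n) * log 2 (real n)"
    if "real (Suc k) \<le> 3 * sqrt (real n)" for k
  proof -
    have "real (w * Suc k) = real w * real (Suc k)" by (simp only: of_nat_mult)
    also have "\<dots> \<le> (3 * log 2 (real n)) * (3 * sqrt (real n))"
      by (rule mult_mono) (use wle that l0 in auto)
    finally show ?thesis by (simp add: algebra_simps)
  qed
  have H: "\<forall>P. perm_matrix n P \<longrightarrow>
        (\<forall>i<n. real (length (rowlab P i)) \<le> 9 * sqrt (real n) * log 2 (real n)) \<and>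
        (\<forall>j<n. real (length (collab P j)) \<le> 9 * sqrt (real n) * log 2 (real n)) \<and>
        (\<forall>i<n. \<forall>j<n. dec (rowlab P i) (collab P j) = dom_sum n P i j)"
  proof (rule allI, rule impI)
    fix P assume pm: "perm_matrix n P"
    have h1: "\<forall>i<n. real (length (rowlab P i)) \<le> 9 * sqrt (real n) * log 2 (real n)"
      using lenbound[OF mle] by (simp add: rowlab_def)
    have h2: "\<forall>j<n. real (length (collab P j)) \<le> 9 * sqrt (real n) * log 2 (real n)"
      using lenbound[OF ble] by (simp add: collab_def)
    have h3: "\<forall>i<n. \<forall>j<n. dec (rowlab P i) (collab P j) = dom_sum n P i j"
    proof (intro allI impI)
      fix i j assume i: "i < n" and j: "j < n"
      define k where "k = j div b"
      define a where "a = k * b"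
      define g where "g = (\<lambda>t. if a + t < j then colv n P (a + t) else 0)"
      have km: "k < m" unfolding k_def m_def using j by (simp add: div_le_mono less_Suc_eq_le)
      have aj: "a \<le> j" unfolding a_def k_def by (metis div_mult_mod_eq le_add1)
      have ja: "j < a + b" unfolding a_def k_def using bpos
        by (metis add.commute div_mult_mod_eq mod_less_divisor nat_add_left_cancel_less)
      let ?rl = "i # map (\<lambda>k. dom_sum n P i (k * b)) [0..<m]"
      let ?cl = "k # map g [0..<b]"
      have rl: "rowlab P i = enc w ?rl" unfolding rowlab_def by simp
      have cl: "collab P j = enc w ?cl" unfolding collab_def g_def a_def k_def by simp
      have rlb: "\<forall>x\<in>set ?rl. x < 2 ^ w" using i nw dom_le[OF pm] by (auto intro: le_less_trans)
      have clb: "\<forall>x\<in>set ?cl. x < 2 ^ w"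
      proof -
        have "k < 2 ^ w" using km j nw unfolding k_def
          by (meson div_le_dividend le_less_trans less_imp_le)
        moreover have "g t < 2 ^ w" for t
        proof (cases "a + t < j")
          case True
          then have "colv n P (a + t) \<le> n" using col_sum(2)[OF pm] j by simp
          then show ?thesis unfolding g_def using True nw by simp
        qed (simp add: g_def)
        ultimately show ?thesis by auto
      qed
      have r0: "getv w (rowlab P i) 0 = i" using getv_enc[OF rlb] rl by simp
      have rk: "getv w (rowlab P i) (Suc k) = dom_sum n P i a"
        using getv_enc[OF rlb, of "Suc k"] rl km unfolding a_def by simp
      have c0: "getv w (collab P j) 0 = k" using getv_enc[OF clb] cl by simp
      have ct: "getv w (collab P j) (Suc t) = g t" if "t < b" for t
        using getv_enc[OF clb, of "Suc t"] cl that by simp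
      have cardeq: "card {t. t < b \<and> getv w (rowlab P i) 0 < getv w (collab P j) (Suc t)}
          = card {t. t < b \<and> i < g t}"
        using r0 ct by (metis (no_types, lifting))
      have "dom_sum n P i a = dom_sum n P i j + card {c\<in>{a..<j}. i < colv n P c}"
        using dom_split[OF pm aj] j by simp
      also have "card {c\<in>{a..<j}. i < colv n P c} = card {t. t < b \<and> i < g t}"
        unfolding g_def using card_shift[of j a b "\<lambda>c. i < colv n P c" i "colv n P"] ja by simp
      finally have "dom_sum n P i a = dom_sum n P i j + card {t. t < b \<and> i < g t}" .
      then show "dec (rowlab P i) (collab P j) = dom_sum n P i j"
        unfolding dec_def using rk c0 cardeq by simp
    qed
    show "(\<forall>i<n. real (length (rowlab P i)) \<le> 9 * sqrt (real n) * log 2 (real n)) \<and>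
        (\<forall>j<n. real (length (collab P j)) \<le> 9 * sqrt (real n) * log 2 (real n)) \<and>
        (\<forall>i<n. \<forall>j<n. dec (rowlab P i) (collab P j) = dom_sum n P i j)"
      using h1 h2 h3 by blast
  qed
  then show ?thesis by blast
qed

theorem lemma15:
  shows "\<exists>C::real. C > 0 \<and> (\<forall>n::nat. n \<ge> 2 \<longrightarrow>
    (\<exists>(rowlab :: (nat \<Rightarrow> nat \<Rightarrow> nat) \<Rightarrow> nat \<Rightarrow> bool list)
      (collab :: (nat \<Rightarrow> nat \<Rightarrow> nat) \<Rightarrow> nat \<Rightarrow> bool list)
      (dec :: bool list \<Rightarrow> bool list \<Rightarrow> nat).
      \<forall>P. perm_matrix n P \<longrightarrow>
        (\<forall>i<n. real (length (rowlab P i)) \<le> C * sqrt (real n) * log 2 (real n)) \<and>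
        (\<forall>j<n. real (length (collab P j)) \<le> C * sqrt (real n) * log 2 (real n)) \<and>
        (\<forall>i<n. \<forall>j<n. dec (rowlab P i) (collab P j) = dom_sum n P i j)))"
  apply (rule exI[of _ "9::real"])
  using main_lem by simp

end
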